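(* Let $\hat M_1,\dots,\hat M_N$ be real $d\times d$ matrices and $\mathcal L(U)=\sum_{n=1}^N\|{\rm low}(U^T\hat M_nU)\|^2$ for $U\in\mathbb O(d)$. If $U$ is a stationary point of $\mathcal L$ on $\mathbb O(d)$, then $S-S^T=0$, where $S=\sum_{n=1}^N\big[U^T\hat M_n^TU,\ {\rm low}(U^T\hat M_nU)\big]$.
   Context: $\|\cdot\|$ is the Frobenius norm; ${\rm low}(A)$ is the strictly lower-triangular part of $A$ ($[{\rm low}(A)]_{ij}=A_{ij}$ if $i>j$, else $0$); $[A,B]=AB-BA$. $\mathbb O(d)$ is the manifold of orthogonal matrices; $U$ is a stationary point if $\frac{d}{dt}\mathcal L(Ue^{tX})|_{t=0}=0$ for every skew-symmetric $X$. *)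

theory Defs
  imports "HOL-Analysis.Analysis"
begin

text \<open>Real d x d matrices are represented as real^('d::{finite,linorder})^('d::{finite,linorder}); the library norm on this
type is the Frobenius norm (square root of the sum of squared entries).\<close>

definition low :: "real^('d::{finite,linorder})^('d::{finite,linorder}) \<Rightarrow> real^('d::{finite,linorder})^('d::{finite,linorder})" where
  "low A = (\<chi> i j. if i > j then A $ i $ j else 0)"

definition mat_pow :: "real^('d::{finite,linorder})^('d::{finite,linorder}) \<Rightarrow> nat \<Rightarrow> real^('d::{finite,linorder})^('d::{finite,linorder})" where
  "mat_pow A k = ((\<lambda>B. B ** A) ^^ k) (mat 1)"

definition mat_exp :: "real^('d::{finite,linorder})^('d::{finite,linorder}) \<Rightarrow> real^('d::{finite,linorder})^('d::{finite,linorder})" where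
  "mat_exp A = (\<Sum>k. (1 / fact k) *\<^sub>R mat_pow A k)"

definition commutator :: "real^('d::{finite,linorder})^('d::{finite,linorder}) \<Rightarrow> real^('d::{finite,linorder})^('d::{finite,linorder}) \<Rightarrow> real^('d::{finite,linorder})^('d::{finite,linorder})" where
  "commutator A B = A ** B - B ** A"

definition skew :: "real^('d::{finite,linorder})^('d::{finite,linorder}) \<Rightarrow> bool" where
  "skew X \<longleftrightarrow> transpose X = - X"

definition Lfun :: "nat \<Rightarrow> (nat \<Rightarrow> real^('d::{finite,linorder})^('d::{finite,linorder})) \<Rightarrow> real^('d::{finite,linorder})^('d::{finite,linorder}) \<Rightarrow> real" where
  "Lfun N M U = (\<Sum>n\<in>{1..N}. (norm (low (transpose U ** M n ** U)))\<^sup>2)"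

end

theory Submission
  imports Defs
begin


lemma mat_pow_Suc: "mat_pow A (Suc k) = mat_pow A k ** A"
  by (simp add: mat_pow_def)
lemma mat_pow_0: "mat_pow A 0 = mat 1"
  by (simp add: mat_pow_def)

lemma entry_le_norm: "\<bar>(A::real^'n^'m) $ i $ j\<bar> \<le> norm A"
proof -
  have "\<bar>A $ i $ j\<bar> \<le> norm (A $ i)" by (rule component_le_norm_cart)
  also have "\<dots> \<le> norm A" unfolding norm_vec_def by (rule member_le_L2_set) simp_all
  finally show ?thesis .
qed

lemma mat_pow_bound:
  fixes A :: "real^('d::{finite,linorder})^('d::{finite,linorder})"
  shows "\<bar>mat_pow A k $ i $ j\<bar> \<le> (real CARD('d) * norm A) ^ k"
proof (induction k arbitrary: i j)
  case 0 then show ?case by (simp add: mat_pow_0 mat_def)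
next
  case (Suc k)
  have "\<bar>mat_pow A (Suc k) $ i $ j\<bar> = \<bar>\<Sum>l\<in>UNIV. mat_pow A k $ i $ l * A $ l $ j\<bar>"
    by (simp add: mat_pow_Suc matrix_matrix_mult_def)
  also have "\<dots> \<le> (\<Sum>l\<in>(UNIV::'d set). \<bar>mat_pow A k $ i $ l * A $ l $ j\<bar>)"
    by (rule sum_abs)
  also have "\<dots> \<le> (\<Sum>l\<in>(UNIV::'d set). (real CARD('d) * norm A) ^ k * norm A)"
    apply (rule sum_mono)
    unfolding abs_mult
    by (rule mult_mono[OF Suc.IH entry_le_norm]) auto
  also have "\<dots> = (real CARD('d) * norm A) ^ Suc k" by simp
  finally show ?case .
qed

lemma mat_exp_entry:
  fixes A :: "real^('d::{finite,linorder})^('d::{finite,linorder})"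
  shows "summable (\<lambda>k. (1 / fact k) * mat_pow A k $ i $ j)"
    and "mat_exp A $ i $ j = (\<Sum>k. (1 / fact k) * mat_pow A k $ i $ j)"
proof -
  define K where "K = real CARD('d) * norm A"
  have sm: "summable (\<lambda>k. (1 / fact k) * mat_pow A k $ i $ j)" for i j
  proof (rule summable_comparison_test'[OF summable_exp[of K]])
    fix n :: nat
    show "norm (1 / fact n * mat_pow A n $ i $ j) \<le> inverse (fact n) * K ^ n"
      using mat_pow_bound[of A n i j] by (auto simp: K_def divide_simps abs_mult)
  qed
  then show "summable (\<lambda>k. (1 / fact k) * mat_pow A k $ i $ j)" .
  define s where "s = (\<chi> i j. (\<Sum>k. (1 / fact k) * mat_pow A k $ i $ j))"
  have "(\<lambda>k. (1 / fact k) *\<^sub>R mat_pow A k) sums s"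
    unfolding sums_def
    apply (rule vec_tendstoI)+
    using sm[THEN summable_sums, unfolded sums_def]
    by (simp add: s_def sum_component)
  then have "mat_exp A = s" unfolding mat_exp_def by (rule sums_unique[symmetric])
  then show "mat_exp A $ i $ j = (\<Sum>k. (1 / fact k) * mat_pow A k $ i $ j)"
    by (simp add: s_def)
qed

lemma mat_pow_scale: "mat_pow (t *\<^sub>R X) k = t ^ k *\<^sub>R mat_pow (X::real^('n::{finite,linorder})^('n::{finite,linorder})) k"
  by (induction k) (simp_all add: mat_pow_0 mat_pow_Suc matrix_scalar_ac scalar_matrix_assoc[symmetric])

lemma mat_exp_deriv:
  fixes X :: "real^('d::{finite,linorder})^('d::{finite,linorder})"
  shows "((\<lambda>t. mat_exp (t *\<^sub>R X) $ i $ j) has_real_derivative X $ i $ j) (at 0)"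
    and "mat_exp (0 *\<^sub>R X) $ i $ j = mat 1 $ i $ j"
proof -
  define c where "c k = mat_pow X k $ i $ j / fact k" for k
  have e: "mat_exp (t *\<^sub>R X) $ i $ j = (\<Sum>k. c k * t ^ k)" for t
    unfolding mat_exp_entry(2) mat_pow_scale c_def by (simp add: mult_ac)
  have s: "summable (\<lambda>k. c k * t ^ k)" for t
    using mat_exp_entry(1)[of "t *\<^sub>R X" i j] unfolding mat_pow_scale c_def by (simp add: mult_ac)
  have "((\<lambda>t. \<Sum>k. c k * t ^ k) has_real_derivative (\<Sum>k. diffs c k * 0 ^ k)) (at 0)"
    by (rule termdiffs_strong_converges_everywhere[OF s])
  moreover have "(\<Sum>k. diffs c k * 0 ^ k) = X $ i $ j"
    unfolding powser_zero by (simp add: diffs_def c_def mat_pow_Suc mat_pow_0)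
  ultimately show "((\<lambda>t. mat_exp (t *\<^sub>R X) $ i $ j) has_real_derivative X $ i $ j) (at 0)"
    unfolding e by simp
  show "mat_exp (0 *\<^sub>R X) $ i $ j = mat 1 $ i $ j"
    by (simp only: e powser_zero) (simp add: c_def mat_pow_0)
qed


lemma normsq_vec: "(norm (x::real^'n))^2 = (\<Sum>i\<in>UNIV. (x $ i)^2)"
  unfolding norm_vec_def L2_set_def by (simp add: sum_nonneg)

lemma normsq_mat: "(norm (B::real^'n^'m))^2 = (\<Sum>i\<in>UNIV. \<Sum>j\<in>UNIV. (B $ i $ j)^2)"
  unfolding norm_vec_def[of B] L2_set_def by (simp add: sum_nonneg normsq_vec)

lemma normsq_low:
  "(norm (low (B::real^('d::{finite,linorder})^('d::{finite,linorder}))))^2 =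
     (\<Sum>i\<in>UNIV. \<Sum>j\<in>UNIV. if j < i then (B $ i $ j)^2 else 0)"
  unfolding normsq_mat low_def by (auto intro!: sum.cong)

lemma entry_TAG:
  "(transpose G ** A ** G) $ i $ j = (\<Sum>l\<in>UNIV. (\<Sum>k\<in>UNIV. G $ k $ i * A $ k $ l) * G $ l $ j)"
  by (simp add: matrix_matrix_mult_def transpose_def)

lemma deriv_quad:
  fixes G :: "real \<Rightarrow> real^('d::{finite,linorder})^('d::{finite,linorder})"
  assumes dG: "\<And>i j. ((\<lambda>t. G t $ i $ j) has_real_derivative Gd $ i $ j) (at 0)"
    and G0: "G 0 = mat 1"
  shows "((\<lambda>t. (norm (low (transpose (G t) ** A ** G t)))^2) has_real_derivative
           (\<Sum>i\<in>UNIV. \<Sum>j\<in>UNIV. if j < i then 2 * A $ i $ j * ((transpose Gd ** A + A ** Gd) $ i $ j) else 0)) (at 0)"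
proof -
  have db: "((\<lambda>t. (transpose (G t) ** A ** G t) $ i $ j) has_real_derivative
              (transpose Gd ** A + A ** Gd) $ i $ j) (at 0)" for i j
  proof -
    have "((\<lambda>t. (\<Sum>l\<in>UNIV. (\<Sum>k\<in>UNIV. G t $ k $ i * A $ k $ l) * G t $ l $ j)) has_real_derivative
         (\<Sum>l\<in>UNIV. (\<Sum>k\<in>UNIV. Gd $ k $ i * A $ k $ l) * G 0 $ l $ j + (\<Sum>k\<in>UNIV. G 0 $ k $ i * A $ k $ l) * Gd $ l $ j)) (at 0)"
    proof (rule DERIV_sum)
      fix l
      have inner: "((\<lambda>t. \<Sum>k\<in>UNIV. G t $ k $ i * A $ k $ l) has_real_derivative (\<Sum>k\<in>UNIV. Gd $ k $ i * A $ k $ l)) (at 0)"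
        by (intro DERIV_sum DERIV_cmult_right dG)
      show "((\<lambda>t. (\<Sum>k\<in>UNIV. G t $ k $ i * A $ k $ l) * G t $ l $ j) has_real_derivative
         (\<Sum>k\<in>UNIV. Gd $ k $ i * A $ k $ l) * G 0 $ l $ j + (\<Sum>k\<in>UNIV. G 0 $ k $ i * A $ k $ l) * Gd $ l $ j) (at 0)"
        using DERIV_mult'[OF inner dG[of l j]] by (simp add: add.commute)
    qed
    moreover have "(\<Sum>l\<in>UNIV. (\<Sum>k\<in>UNIV. Gd $ k $ i * A $ k $ l) * G 0 $ l $ j + (\<Sum>k\<in>UNIV. G 0 $ k $ i * A $ k $ l) * Gd $ l $ j)
        = (transpose Gd ** A + A ** Gd) $ i $ j"
    proof -
      have 1: "(\<Sum>l\<in>UNIV. (\<Sum>k\<in>UNIV. Gd $ k $ i * A $ k $ l) * G 0 $ l $ j) = (transpose Gd ** A) $ i $ j"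
        by (simp add: G0 mat_def matrix_matrix_mult_def transpose_def if_distrib if_distribR cong: if_cong)
      have 2: "(\<Sum>l\<in>UNIV. (\<Sum>k\<in>UNIV. G 0 $ k $ i * A $ k $ l) * Gd $ l $ j) = (A ** Gd) $ i $ j"
        by (simp add: G0 mat_def matrix_matrix_mult_def transpose_def if_distrib if_distribR cong: if_cong)
      show ?thesis by (simp only: sum.distrib 1 2 vector_add_component)
    qed
    ultimately show ?thesis unfolding entry_TAG by simp
  qed
  have A0: "(transpose (G 0) ** A ** G 0) = A" by (simp add: G0)
  show ?thesis
    unfolding normsq_low
    apply (intro DERIV_sum)
    subgoal for i j
      using DERIV_power[OF db[of i j], of 2] by (auto simp: A0 mult_ac)
    done
qed



lemma h1: "(\<Sum>i\<in>(UNIV::'a::finite set). \<Sum>j\<in>(UNIV::'b::finite set). if i = q then f i j else 0) = (\<Sum>j\<in>UNIV. (f q j::real))"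
proof -
  have "(\<Sum>i\<in>(UNIV::'a set). \<Sum>j\<in>(UNIV::'b set). if i = q then f i j else 0) = (\<Sum>i\<in>(UNIV::'a set). if i = q then (\<Sum>j\<in>UNIV. f i j) else 0)"
    by (intro sum.cong) auto
  then show ?thesis by simp
qed

lemma h2: "(\<Sum>i\<in>(UNIV::'a::finite set). \<Sum>j\<in>(UNIV::'b::finite set). if j = q then f i j else 0) = (\<Sum>i\<in>UNIV. (f i q::real))"
  by simp

lemma alg:
  fixes A :: "real^('d::{finite,linorder})^('d::{finite,linorder})" and p q :: 'd
  defines "X \<equiv> (\<chi> a b. (if a = p \<and> b = q then 1 else 0) - (if a = q \<and> b = p then 1 else 0)) :: real^('d::{finite,linorder})^('d::{finite,linorder})"
  shows "(\<Sum>i\<in>UNIV. \<Sum>j\<in>UNIV. if j < i then 2 * A $ i $ j * ((transpose X ** A + A ** X) $ i $ j) else 0)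
     = 2 * (commutator (transpose A) (low A) $ p $ q - commutator (transpose A) (low A) $ q $ p)"
proof -
  define L where "L = low A"
  have "(\<Sum>i\<in>UNIV. \<Sum>j\<in>UNIV. if j < i then 2 * A $ i $ j * ((transpose X ** A + A ** X) $ i $ j) else 0)
      = 2 * (\<Sum>i\<in>UNIV. \<Sum>j\<in>UNIV. L $ i $ j * ((transpose X ** A + A ** X) $ i $ j))"
    by (simp add: L_def low_def sum_distrib_left if_distrib if_distribR mult.assoc cong: if_cong)
  also have "(\<Sum>i\<in>UNIV. \<Sum>j\<in>UNIV. L $ i $ j * ((transpose X ** A + A ** X) $ i $ j))
     = (\<Sum>j\<in>UNIV. L $ q $ j * A $ p $ j) - (\<Sum>j\<in>UNIV. L $ p $ j * A $ q $ j)
       + (\<Sum>i\<in>UNIV. A $ i $ p * L $ i $ q) - (\<Sum>i\<in>UNIV. A $ i $ q * L $ i $ p)"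
  proof -
    have tX: "(transpose X ** A) $ i $ j = (if i = q then A $ p $ j else 0) - (if i = p then A $ q $ j else 0)" for i j
    proof -
      have "(transpose X ** A) $ i $ j = (\<Sum>k\<in>UNIV. (if k = p \<and> i = q then 1 else 0) * A $ k $ j - (if k = q \<and> i = p then 1 else 0) * A $ k $ j)"
        by (simp add: X_def matrix_matrix_mult_def transpose_def left_diff_distrib)
      also have "\<dots> = (if i = q then A $ p $ j else 0) - (if i = p then A $ q $ j else 0)"
        unfolding sum_subtractf by (cases "i = q"; cases "i = p") (simp_all add: if_distrib if_distribR cong: if_cong)
      finally show ?thesis .
    qed
    have Xr: "(A ** X) $ i $ j = (if j = q then A $ i $ p else 0) - (if j = p then A $ i $ q else 0)" for i j
    proof -
      have "(A ** X) $ i $ j = (\<Sum>k\<in>UNIV. A $ i $ k * (if k = p \<and> j = q then 1 else 0) - A $ i $ k * (if k = q \<and> j = p then 1 else 0))"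
        by (simp add: X_def matrix_matrix_mult_def right_diff_distrib)
      also have "\<dots> = (if j = q then A $ i $ p else 0) - (if j = p then A $ i $ q else 0)"
        unfolding sum_subtractf by (cases "j = q"; cases "j = p") (simp_all add: if_distrib if_distribR cong: if_cong)
      finally show ?thesis .
    qed
    have "(\<Sum>i\<in>UNIV. \<Sum>j\<in>UNIV. L $ i $ j * ((transpose X ** A + A ** X) $ i $ j))
      = (\<Sum>i\<in>UNIV. \<Sum>j\<in>UNIV. (if i = q then L $ i $ j * A $ p $ j else 0) - (if i = p then L $ i $ j * A $ q $ j else 0)
          + (if j = q then L $ i $ j * A $ i $ p else 0) - (if j = p then L $ i $ j * A $ i $ q else 0))"
      by (intro sum.cong refl) (simp add: tX Xr algebra_simps)
    also have "\<dots> = (\<Sum>j\<in>UNIV. L $ q $ j * A $ p $ j) - (\<Sum>j\<in>UNIV. L $ p $ j * A $ q $ j)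
       + (\<Sum>i\<in>UNIV. A $ i $ p * L $ i $ q) - (\<Sum>i\<in>UNIV. A $ i $ q * L $ i $ p)"
      by (simp only: sum.distrib sum_subtractf h1 h2) (simp add: mult.commute)
    finally show ?thesis .
  qed
  also have "\<dots> = commutator (transpose A) L $ p $ q - commutator (transpose A) L $ q $ p"
    by (simp add: commutator_def matrix_matrix_mult_def transpose_def algebra_simps sum_subtractf)
  finally show ?thesis by (simp add: L_def)
qed



lemma tr_conj: fixes U E M :: "real^'n^'n" shows "transpose (U ** E) ** M ** (U ** E) = transpose E ** (transpose U ** M ** U) ** E"
  by (simp add: matrix_transpose_mul matrix_mul_assoc)

lemma skX: fixes p q :: "'d::{finite,linorder}"
  shows "skew ((\<chi> a b. (if a = p \<and> b = q then 1 else 0) - (if a = q \<and> b = p then 1 else 0)) :: real^('d::{finite,linorder})^('d::{finite,linorder}))"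
    (is "skew ?X")
proof -
  have e: "?X $ i $ j = (if i = p \<and> j = q then 1 else 0) - (if i = q \<and> j = p then 1 else 0)" for i j
    by (simp only: vec_lambda_beta)
  have "transpose ?X $ i $ j = (- ?X) $ i $ j" for i j
    unfolding transpose_def vec_lambda_beta vector_uminus_component e by (cases "i = p"; cases "j = q"; cases "i = q"; cases "j = p") simp_all
  then show ?thesis unfolding skew_def by (simp only: vec_eq_iff) blast
qed

theorem lemma5:
  fixes N :: nat and M :: "nat \<Rightarrow> real^('d::{finite,linorder})^('d::{finite,linorder})" and U :: "real^('d::{finite,linorder})^('d::{finite,linorder})"
  assumes orth: "orthogonal_matrix U"
    and stat: "\<And>X. skew X \<Longrightarrow>
       ((\<lambda>t. Lfun N M (U ** mat_exp (t *\<^sub>R X))) has_real_derivative 0) (at 0)"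
  shows "let S = (\<Sum>n\<in>{1..N}. commutator (transpose U ** transpose (M n) ** U)
                                         (low (transpose U ** M n ** U)))
         in S - transpose S = 0"
proof -
  define A where "A n = transpose U ** M n ** U" for n
  define C where "C n = commutator (transpose (A n)) (low (A n))" for n
  have tA: "transpose U ** transpose (M n) ** U = transpose (A n)" for n
    by (simp add: A_def matrix_transpose_mul matrix_mul_assoc)
  define S where "S = (\<Sum>n\<in>{1..N}. C n)"
  have key: "S $ p $ q - S $ q $ p = 0" for p q
  proof -
    define X :: "real^('d::{finite,linorder})^('d::{finite,linorder})" where
      "X = (\<chi> a b. (if a = p \<and> b = q then 1 else 0) - (if a = q \<and> b = p then 1 else 0))"
    have sk: "skew X" unfolding X_def by (rule skX)
    define D where "D n = (\<Sum>i\<in>UNIV. \<Sum>j\<in>UNIV. if j < i then 2 * A n $ i $ j * ((transpose X ** A n + A n ** X) $ i $ j) else 0)" for n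
    have G0: "mat_exp (0 *\<^sub>R X) = mat 1"
      using mat_exp_deriv(2)[of X] by (simp add: vec_eq_iff)
    have "((\<lambda>t. Lfun N M (U ** mat_exp (t *\<^sub>R X))) has_real_derivative (\<Sum>n\<in>{1..N}. D n)) (at 0)"
      unfolding Lfun_def tr_conj D_def
      apply (intro DERIV_sum)
      apply (unfold A_def)
      apply (rule deriv_quad[where G="\<lambda>t. mat_exp (t *\<^sub>R X)", OF mat_exp_deriv(1) G0])
      done
    then have "(\<Sum>n\<in>{1..N}. D n) = 0"
      using stat[OF sk] DERIV_unique by blast
    moreover have "D n = 2 * (C n $ p $ q - C n $ q $ p)" for n
      using alg[of "A n" p q] unfolding D_def C_def X_def[symmetric] by simp
    ultimately show ?thesis
      by (simp add: S_def sum_component sum_subtractf sum_distrib_left[symmetric])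
  qed
  have "S - transpose S = 0"
    using key by (simp add: vec_eq_iff transpose_def)
  then show ?thesis unfolding S_def C_def tA Let_def by (simp add: A_def)
qed


end
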